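(* Define $J_T(\pi)=g_T(\pi)$ and, for $k=T-1,\dots,0$, $$J_k(\pi)=\inf_{u\in\mathcal U}\Big\{g_k(\pi,u)+E_{Y_{k+1}}\big[J_{k+1}(\Pi(\pi,u,y_{k+1}))\,\big|\,\pi,u\big]\Big\},$$ where $Y_{k+1}$ has (mass or density) function $p(y\mid\pi,u)=\sum_{i,j}B^i(y,u)A^{ij}(u)\pi(j)$. Then for every $0\le k\le T$, $J_k$ is concave on $\Delta^N$.
   Context: Controlled HMM: states $\{e_1,\dots,e_N\}$, finite control set $\mathcal U$, transition probabilities $A^{ij}(u)=p(X_{k+1}=e_i\mid X_k=e_j,U_k=u)$, measurement space $\mathcal Y$ (finite, or with densities w.r.t. a reference measure), measurement kernels $B^i(y,u)=p(Y_{k}=y\mid X_{k}=e_i,U_{k-1}=u)$. $\Delta^N=\{x\in\mathbb R^N:\sum_i x(i)=1,\ 0\le x(i)\le1\}$. Filter map: $\Pi(\pi,u,y)(i)=\frac{B^i(y,u)\sum_jA^{ij}(u)\pi(j)}{\sum_\ell\sum_jB^\ell(y,u)A^{\ell j}(u)\pi(j)}$. Costs $c_T:\{e_i\}\to[0,\infty)$, $c_k:\{e_i\}\times\mathcal U\to[0,\infty)$. Define $\tilde g_T(\pi)=-\sum_i\pi(i)\log\pi(i)$, $\tilde g_k(\pi,u)=-\sum_{i,j=1}^N A^{ij}(u)\pi(j)\log\frac{A^{ij}(u)\pi(j)}{\sum_{\ell=1}^N A^{i\ell}(u)\pi(\ell)}$ (with $0\log0=0$), $g_k(\pi,u)=\tilde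 g_k(\pi,u)+\sum_i\pi(i)c_k(e_i,u)$, $g_T(\pi)=\tilde g_T(\pi)+\sum_i\pi(i)c_T(e_i)$. $J_k$ is the value function of the belief-state reformulation of the active smoothing problem (minimising smoother entropy plus expected costs). *)

theory Defs
  imports "HOL-Analysis.Analysis"
begin

text \<open>Belief states are vectors pi :: real^'n, the N hidden states being the elements
of the finite type 'n. A u i j = p(X_{k+1}=e_i | X_k=e_j, U_k=u).
B u i y = B^i(y,u), a density with respect to the reference measure M on 'y
(M = count_space for a finite measurement space).\<close>

definition belief_simplex :: "(real^'n::finite) set" where
  "belief_simplex = {x. (\<forall>i. 0 \<le> x $ i \<and> x $ i \<le> 1) \<and> (\<Sum>i\<in>UNIV. x $ i) = 1}"

definition plogq :: "real \<Rightarrow> real \<Rightarrow> real" where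
  "plogq a b = (if a = 0 then 0 else a * ln (a / b))"

definition filt :: "('u \<Rightarrow> 'n \<Rightarrow> 'n \<Rightarrow> real) \<Rightarrow> ('u \<Rightarrow> 'n \<Rightarrow> 'y \<Rightarrow> real)
    \<Rightarrow> real^'n::finite \<Rightarrow> 'u \<Rightarrow> 'y \<Rightarrow> real^'n" where
  "filt A B p u y = (\<chi> i. B u i y * (\<Sum>j\<in>UNIV. A u i j * p $ j) /
      (\<Sum>l\<in>UNIV. \<Sum>j\<in>UNIV. B u l y * A u l j * p $ j))"

definition obs_density :: "('u \<Rightarrow> 'n \<Rightarrow> 'n \<Rightarrow> real) \<Rightarrow> ('u \<Rightarrow> 'n \<Rightarrow> 'y \<Rightarrow> real)
    \<Rightarrow> real^'n::finite \<Rightarrow> 'u \<Rightarrow> 'y \<Rightarrow> real" where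
  "obs_density A B p u y = (\<Sum>i\<in>UNIV. \<Sum>j\<in>UNIV. B u i y * A u i j * p $ j)"

definition gT :: "('n \<Rightarrow> real) \<Rightarrow> real^'n::finite \<Rightarrow> real" where
  "gT cT p = - (\<Sum>i\<in>UNIV. plogq (p $ i) 1) + (\<Sum>i\<in>UNIV. p $ i * cT i)"

text \<open>Running stage cost g_k; c k i u = c_k(e_i,u).\<close>
definition gk :: "('u \<Rightarrow> 'n \<Rightarrow> 'n \<Rightarrow> real) \<Rightarrow> (nat \<Rightarrow> 'n \<Rightarrow> 'u \<Rightarrow> real)
    \<Rightarrow> nat \<Rightarrow> real^'n::finite \<Rightarrow> 'u \<Rightarrow> real" where
  "gk A c k p u = - (\<Sum>i\<in>UNIV. \<Sum>j\<in>UNIV.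
        plogq (A u i j * p $ j) (\<Sum>l\<in>UNIV. A u i l * p $ l))
     + (\<Sum>i\<in>UNIV. p $ i * c k i u)"

text \<open>Jrem T n = J_{T-n}: value function with n stages remaining.\<close>
fun Jrem :: "('u::finite \<Rightarrow> 'n \<Rightarrow> 'n \<Rightarrow> real) \<Rightarrow> ('u \<Rightarrow> 'n \<Rightarrow> 'y \<Rightarrow> real) \<Rightarrow> 'y measure
    \<Rightarrow> ('n \<Rightarrow> real) \<Rightarrow> (nat \<Rightarrow> 'n \<Rightarrow> 'u \<Rightarrow> real) \<Rightarrow> nat \<Rightarrow> nat \<Rightarrow> real^'n::finite \<Rightarrow> real" where
  "Jrem A B M cT c T 0 p = gT cT p"
| "Jrem A B M cT c T (Suc n) p =
     Min (range (\<lambda>u. gk A c (T - Suc n) p u +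
        (\<integral>y. Jrem A B M cT c T n (filt A B p u y) * obs_density A B p u y \<partial>M)))"

definition Jval :: "('u::finite \<Rightarrow> 'n \<Rightarrow> 'n \<Rightarrow> real) \<Rightarrow> ('u \<Rightarrow> 'n \<Rightarrow> 'y \<Rightarrow> real) \<Rightarrow> 'y measure
    \<Rightarrow> ('n \<Rightarrow> real) \<Rightarrow> (nat \<Rightarrow> 'n \<Rightarrow> 'u \<Rightarrow> real) \<Rightarrow> nat \<Rightarrow> nat \<Rightarrow> real^'n::finite \<Rightarrow> real" where
  "Jval A B M cT c T k = Jrem A B M cT c T (T - k)"

end

theory Submission imports Defs "HOL-Real_Asymp.Real_Asymp" begin

lemma isCont_xlnx: "isCont (\<lambda>x::real. x * ln x) x"
proof (cases "x = 0")
  case True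
  have r: "((\<lambda>x::real. x * ln x) \<longlongrightarrow> 0) (at_right 0)" by real_asymp
  have "((\<lambda>x::real. (-x) * ln (-x)) \<longlongrightarrow> 0) (at_right 0)"
    using tendsto_minus[OF r] by (simp add: ln_minus)
  then have l: "((\<lambda>x::real. x * ln x) \<longlongrightarrow> 0) (at_left 0)"
    by (simp add: filterlim_at_left_to_right)
  show ?thesis using True filterlim_split_at[OF l r] by (simp add: isCont_def)
next
  case False
  show ?thesis
  proof (cases "x > 0")
    case True then show ?thesis by (intro continuous_intros) auto
  next
    case F2: False
    with False have "x < 0" by auto
    have "isCont (\<lambda>x::real. x * ln (- x)) x" using \<open>x<0\<close> by (intro continuous_intros) auto
    then show ?thesis by (simp add: ln_minus)
  qed
qed

lemma convex_xlnx: "convex_on {0..} (\<lambda>x::real. x * ln x)"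
proof -
  have pos: "convex_on {0<..} (\<lambda>x::real. x * ln x)"
  proof (rule f''_ge0_imp_convex[where f'="\<lambda>x. ln x + 1" and f''="\<lambda>x. 1 / x"])
    show "convex {0::real<..}" by simp
    fix x :: real assume "x \<in> {0<..}"
    then have x: "x > 0" by simp
    show "DERIV (\<lambda>x. x * ln x) x :> ln x + 1"
      using x by (auto intro!: derivative_eq_intros)
    show "DERIV (\<lambda>x. ln x + 1) x :> 1 / x"
      using x by (auto intro!: derivative_eq_intros)
    show "0 \<le> 1 / x" using x by simp
  qed
  show ?thesis
    unfolding convex_on_def
  proof (intro conjI ballI allI impI)
    show "convex {0::real..}" by simp
    fix a b u v :: real assume a: "a \<in> {0..}" and b: "b \<in> {0..}" and u: "0 \<le> u" and v: "0 \<le> v" and uv: "u + v = 1"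
    show "(u *\<^sub>R a + v *\<^sub>R b) * ln (u *\<^sub>R a + v *\<^sub>R b) \<le> u * (a * ln a) + v * (b * ln b)"
    proof (cases "a = 0 \<or> b = 0 \<or> u = 0 \<or> v = 0")
      case True
      have lu: "ln u \<le> 0" using u uv v by (cases "u = 0") auto
      have lv: "ln v \<le> 0" using u uv v by (cases "v = 0") auto
      have A: "(u * a) * ln (u * a) \<le> u * (a * ln a)" if "a \<ge> 0" for a
      proof (cases "u = 0 \<or> a = 0")
        case True then show ?thesis by auto
      next
        case False
        then have eq: "ln (u * a) = ln u + ln a" using u that by (simp add: ln_mult)
        have "a * (u * ln u) \<le> 0" using lu u that by (intro mult_nonneg_nonpos) (auto intro: mult_nonneg_nonpos)
        then show ?thesis using eq by (simp add: algebra_simps)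
      qed
      have B: "(v * b) * ln (v * b) \<le> v * (b * ln b)" if "b \<ge> 0" for b
      proof (cases "v = 0 \<or> b = 0")
        case True then show ?thesis by auto
      next
        case False
        then have eq: "ln (v * b) = ln v + ln b" using v that by (simp add: ln_mult)
        have "b * (v * ln v) \<le> 0" using lv v that by (intro mult_nonneg_nonpos) (auto intro: mult_nonneg_nonpos)
        then show ?thesis using eq by (simp add: algebra_simps)
      qed
      from True show ?thesis
      proof (elim disjE)
        assume "a = 0" then show ?thesis using B[of b] b by simp
      next
        assume "b = 0" then show ?thesis using A[of a] a by simp
      next
        assume "u = 0" then show ?thesis using uv by simp
      next
        assume "v = 0" then show ?thesis using uv by simp
      qed
    next
      case False
      then have "a \<in> {0<..}" "b \<in> {0<..}" using a b by auto
      then show ?thesis using pos u v uv unfolding convex_on_def by blast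
    qed
  qed
qed


definition orth :: "(real^'n::finite) set" where "orth = {x. \<forall>i. 0 \<le> x $ i}"

definition persp :: "(real^'n::finite \<Rightarrow> real) \<Rightarrow> real^'n \<Rightarrow> real" where
  "persp g q = (\<Sum>i\<in>UNIV. q $ i) * g ((1 / (\<Sum>i\<in>UNIV. q $ i)) *\<^sub>R q)"

definition ent :: "real^'n::finite \<Rightarrow> real" where
  "ent p = - (\<Sum>i\<in>UNIV. p $ i * ln (p $ i))"

lemma plogq_eq: "plogq a b = a * ln (a / b)"
  by (simp add: plogq_def)

lemma convex_orth: "convex (orth :: (real^'n::finite) set)"
  unfolding orth_def convex_def by (auto intro!: add_nonneg_nonneg mult_nonneg_nonneg)

lemma convex_simplex: "convex (belief_simplex :: (real^'n::finite) set)"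
proof (unfold convex_def, intro ballI allI impI)
  fix x y :: "real^'n" and u v :: real
  assume x: "x \<in> belief_simplex" and y: "y \<in> belief_simplex" and u: "0 \<le> u" and v: "0 \<le> v" and uv: "u + v = 1"
  show "u *\<^sub>R x + v *\<^sub>R y \<in> belief_simplex" unfolding belief_simplex_def
  proof (intro CollectI conjI allI)
    fix i
    show "0 \<le> (u *\<^sub>R x + v *\<^sub>R y) $ i" using x y u v by (simp add: belief_simplex_def)
    have "u * x$i \<le> u * 1" using x u by (intro mult_left_mono) (auto simp: belief_simplex_def)
    moreover have "v * y$i \<le> v * 1" using y v by (intro mult_left_mono) (auto simp: belief_simplex_def)
    ultimately show "(u *\<^sub>R x + v *\<^sub>R y) $ i \<le> 1" using uv by simp
  next
    show "(\<Sum>i\<in>UNIV. (u *\<^sub>R x + v *\<^sub>R y) $ i) = 1"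
      using x y uv by (simp add: belief_simplex_def sum.distrib sum_distrib_left[symmetric])
  qed
qed

lemma simplex_orth: "p \<in> belief_simplex \<Longrightarrow> p \<in> orth"
  by (simp add: belief_simplex_def orth_def)

lemma simplex_sum: "p \<in> belief_simplex \<Longrightarrow> (\<Sum>i\<in>UNIV. p $ i) = 1"
  by (simp add: belief_simplex_def)

lemma orth_sum_zero:
  fixes q :: "real^'n::finite"
  assumes "q \<in> orth" "(\<Sum>i\<in>UNIV. q $ i) = 0" shows "q = 0"
proof -
  have "\<forall>i\<in>UNIV. q $ i = 0" using assms sum_nonneg_eq_0_iff[of UNIV "\<lambda>i. q $ i"]
    by (auto simp: orth_def)
  then show ?thesis by (simp add: vec_eq_iff)
qed

lemma orth_sum_nonneg: "q \<in> orth \<Longrightarrow> 0 \<le> (\<Sum>i\<in>UNIV. q $ i)"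
  by (auto simp: orth_def intro!: sum_nonneg)

lemma orth_normalize:
  fixes q :: "real^'n::finite"
  assumes q: "q \<in> orth" and s: "(\<Sum>i\<in>UNIV. q $ i) > 0"
  shows "(1 / (\<Sum>i\<in>UNIV. q $ i)) *\<^sub>R q \<in> belief_simplex"
  unfolding belief_simplex_def
proof (intro CollectI conjI allI)
  fix i
  show "0 \<le> ((1 / (\<Sum>i\<in>UNIV. q $ i)) *\<^sub>R q) $ i" using q s by (simp add: orth_def)
  have "q $ i \<le> (\<Sum>i\<in>UNIV. q $ i)" using q by (intro member_le_sum) (auto simp: orth_def)
  then show "((1 / (\<Sum>i\<in>UNIV. q $ i)) *\<^sub>R q) $ i \<le> 1" using s by simp
next
  show "(\<Sum>i\<in>UNIV. ((1 / (\<Sum>i\<in>UNIV. q $ i)) *\<^sub>R q) $ i) = 1"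
    using s by (simp add: sum_divide_distrib[symmetric])
qed

lemma persp_zero [simp]: "persp g 0 = 0"
  by (simp add: persp_def)

lemma persp_scale:
  fixes q :: "real^'n::finite"
  assumes "0 \<le> c" shows "persp g (c *\<^sub>R q) = c * persp g q"
proof (cases "c = 0")
  case True then show ?thesis by (simp add: persp_def)
next
  case False
  have "(1 / (c * (\<Sum>i\<in>UNIV. q $ i))) *\<^sub>R (c *\<^sub>R q) = (1 / (\<Sum>i\<in>UNIV. q $ i)) *\<^sub>R q"
    using False by simp
  then show ?thesis using False by (simp add: persp_def sum_distrib_left[symmetric])
qed

lemma persp_concave:
  fixes g :: "real^'n::finite \<Rightarrow> real"
  assumes g: "concave_on belief_simplex g"
  shows "concave_on orth (persp g)"
  unfolding concave_on_iff
proof (intro conjI ballI allI impI convex_orth)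
  fix q1 q2 :: "real^'n" and u v :: real
  assume q1: "q1 \<in> orth" and q2: "q2 \<in> orth" and u: "0 \<le> u" and v: "0 \<le> v" and uv: "u + v = 1"
  define s1 where "s1 = (\<Sum>i\<in>UNIV. q1 $ i)"
  define s2 where "s2 = (\<Sum>i\<in>UNIV. q2 $ i)"
  have s1: "0 \<le> s1" using q1 by (simp add: s1_def orth_sum_nonneg)
  have s2: "0 \<le> s2" using q2 by (simp add: s2_def orth_sum_nonneg)
  show "u * persp g q1 + v * persp g q2 \<le> persp g (u *\<^sub>R q1 + v *\<^sub>R q2)"
  proof (cases "u = 0 \<or> s1 = 0")
    case True
    then have e1: "u *\<^sub>R q1 = 0" and e2: "u * persp g q1 = 0"
      using orth_sum_zero[OF q1] by (auto simp: s1_def)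
    have e3: "persp g (v *\<^sub>R q2) = v * persp g q2" using persp_scale[OF v] by blast
    show ?thesis unfolding e1 e2 using e3 by simp
  next
    case F1: False
    show ?thesis
    proof (cases "v = 0 \<or> s2 = 0")
      case True
      then have e1: "v *\<^sub>R q2 = 0" and e2: "v * persp g q2 = 0"
        using orth_sum_zero[OF q2] by (auto simp: s2_def)
      have e3: "persp g (u *\<^sub>R q1) = u * persp g q1" using persp_scale[OF u] by blast
      show ?thesis unfolding e1 e2 using e3 by simp
    next
      case F2: False
      have u0: "u > 0" and s1p: "s1 > 0" using F1 u s1 by auto
      have v0: "v > 0" and s2p: "s2 > 0" using F2 v s2 by auto
      define z1 where "z1 = (1 / s1) *\<^sub>R q1"
      define z2 where "z2 = (1 / s2) *\<^sub>R q2"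
      have z1: "z1 \<in> belief_simplex" using orth_normalize[OF q1] s1p by (simp add: z1_def s1_def)
      have z2: "z2 \<in> belief_simplex" using orth_normalize[OF q2] s2p by (simp add: z2_def s2_def)
      define s where "s = u * s1 + v * s2"
      have sp: "s > 0" using u0 v0 s1p s2p by (simp add: s_def add_pos_pos)
      have ssum: "(\<Sum>i\<in>UNIV. (u *\<^sub>R q1 + v *\<^sub>R q2) $ i) = s"
        by (simp add: s_def s1_def s2_def sum.distrib sum_distrib_left)
      have comb: "(1 / s) *\<^sub>R (u *\<^sub>R q1 + v *\<^sub>R q2) = (u * s1 / s) *\<^sub>R z1 + (v * s2 / s) *\<^sub>R z2"
        using s1p s2p by (simp add: z1_def z2_def scaleR_add_right)
      have w1: "0 \<le> u * s1 / s" "0 \<le> v * s2 / s" using u v s1 s2 sp by auto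
      have w2: "u * s1 / s + v * s2 / s = 1" using sp by (simp add: s_def add_divide_distrib[symmetric])
      have "(u * s1 / s) * g z1 + (v * s2 / s) * g z2 \<le> g ((u * s1 / s) *\<^sub>R z1 + (v * s2 / s) *\<^sub>R z2)"
        using g z1 z2 w1 w2 unfolding concave_on_iff by blast
      then have "s * ((u * s1 / s) * g z1 + (v * s2 / s) * g z2) \<le> s * g ((1 / s) *\<^sub>R (u *\<^sub>R q1 + v *\<^sub>R q2))"
        using sp comb by (simp add: mult_left_mono)
      moreover have "s * ((u * s1 / s) * g z1 + (v * s2 / s) * g z2) = u * persp g q1 + v * persp g q2"
        using sp by (simp add: persp_def s1_def[symmetric] s2_def[symmetric] z1_def z2_def algebra_simps)
      moreover have "persp g (u *\<^sub>R q1 + v *\<^sub>R q2) = s * g ((1 / s) *\<^sub>R (u *\<^sub>R q1 + v *\<^sub>R q2))"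
        unfolding persp_def ssum ..
      ultimately show ?thesis by linarith
    qed
  qed
qed

lemma concave_comp_linear:
  assumes h: "concave_on Y h" and X: "convex X" and LX: "\<And>x. x \<in> X \<Longrightarrow> L x \<in> Y"
    and L: "\<And>x y u v. L (u *\<^sub>R x + v *\<^sub>R y) = u *\<^sub>R L x + v *\<^sub>R L y"
  shows "concave_on X (\<lambda>x. h (L x))"
  unfolding concave_on_iff
proof (intro conjI ballI allI impI X)
  fix x y and u v :: real assume "x \<in> X" "y \<in> X" "0 \<le> u" "0 \<le> v" "u + v = 1"
  then show "u * h (L x) + v * h (L y) \<le> h (L (u *\<^sub>R x + v *\<^sub>R y))"
    using h LX unfolding concave_on_iff L by blast
qed

lemma ent_concave: "concave_on belief_simplex (ent :: real^'n::finite \<Rightarrow> real)"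
  unfolding concave_on_iff
proof (intro conjI ballI allI impI convex_simplex)
  fix x y :: "real^'n" and u v :: real
  assume x: "x \<in> belief_simplex" and y: "y \<in> belief_simplex" and u: "0 \<le> u" and v: "0 \<le> v" and uv: "u + v = 1"
  have "(u * x$i + v * y$i) * ln (u * x$i + v * y$i) \<le> u * (x$i * ln (x$i)) + v * (y$i * ln (y$i))" for i
    using convex_xlnx x y u v uv unfolding convex_on_def belief_simplex_def
    by (metis (no_types, lifting) atLeast_iff mem_Collect_eq real_scaleR_def)
  then have "(\<Sum>i\<in>UNIV. (u * x$i + v * y$i) * ln (u * x$i + v * y$i)) \<le> (\<Sum>i\<in>UNIV. u * (x$i * ln (x$i)) + v * (y$i * ln (y$i)))"
    by (intro sum_mono) auto
  then show "u * ent x + v * ent y \<le> ent (u *\<^sub>R x + v *\<^sub>R y)"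
    by (simp add: ent_def sum.distrib sum_distrib_left)
qed


definition xl :: "real \<Rightarrow> real" where "xl x = x * ln x"

lemma continuous_on_xl [continuous_intros]:
  "continuous_on S f \<Longrightarrow> continuous_on S (\<lambda>x. xl (f x))"
  by (rule continuous_on_compose2[of UNIV xl S f])
     (auto simp: xl_def intro!: continuous_at_imp_continuous_on isCont_xlnx)

lemma concave_on_sum_fun:
  assumes "finite I" "convex S" "\<And>i. i \<in> I \<Longrightarrow> concave_on S (f i)"
  shows "concave_on S (\<lambda>x. \<Sum>i\<in>I. f i x)"
  using assms(1,3)
proof (induction I rule: finite_induct)
  case empty then show ?case using assms(2) by (simp add: concave_on_const)
next
  case (insert i I) then show ?case by (simp add: concave_on_add)
qed

lemma concave_lin:
  fixes c :: "'n::finite \<Rightarrow> real"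
  assumes "convex S"
  shows "concave_on S (\<lambda>p::real^'n. \<Sum>i\<in>UNIV. p $ i * c i)"
  unfolding concave_on_iff
  using assms by (auto simp: sum.distrib sum_distrib_left algebra_simps)

lemma persp_ent:
  fixes x :: "real^'n::finite"
  shows "persp ent x = - (\<Sum>j\<in>UNIV. x $ j * ln (x $ j / (\<Sum>l\<in>UNIV. x $ l)))"
proof (cases "(\<Sum>l\<in>UNIV. x $ l) = 0")
  case True then show ?thesis by (simp add: persp_def)
next
  case False
  then show ?thesis by (simp add: persp_def ent_def sum_distrib_left)
qed

lemma xlog_split:
  fixes x :: "'n::finite \<Rightarrow> real"
  assumes x: "\<And>j. 0 \<le> x j"
  shows "(\<Sum>j\<in>UNIV. x j * ln (x j / (\<Sum>l\<in>UNIV. x l))) =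
    (\<Sum>j\<in>UNIV. xl (x j)) - xl (\<Sum>l\<in>UNIV. x l)"
proof (cases "(\<Sum>l\<in>UNIV. x l) = 0")
  case True
  then have "\<forall>j\<in>UNIV. x j = 0" using sum_nonneg_eq_0_iff[of UNIV x] x by auto
  then show ?thesis by (simp add: xl_def)
next
  case False
  define s where "s = (\<Sum>l\<in>UNIV. x l)"
  have sp: "s > 0" using False x by (simp add: s_def sum_nonneg order_less_le)
  have "x j * ln (x j / s) = xl (x j) - x j * ln s" for j
  proof (cases "x j = 0")
    case True then show ?thesis by (simp add: xl_def)
  next
    case False then have "x j > 0" using x[of j] by auto
    then show ?thesis using sp by (simp add: xl_def ln_div algebra_simps)
  qed
  then show ?thesis by (simp add: s_def[symmetric] sum_subtractf sum_distrib_right[symmetric] xl_def)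
qed

lemma gT_rep: "gT cT p = ent p + (\<Sum>i\<in>UNIV. p $ i * cT i)"
  by (simp add: gT_def ent_def plogq_eq)

lemma gT_rep2: "gT cT p = - (\<Sum>i\<in>UNIV. xl (p $ i)) + (\<Sum>i\<in>UNIV. p $ i * cT i)"
  by (simp add: gT_def xl_def plogq_eq)

lemma gk_rep:
  "gk A c k p u = (\<Sum>i\<in>UNIV. persp ent (\<chi> j. A u i j * p $ j)) + (\<Sum>i\<in>UNIV. p $ i * c k i u)"
  by (simp add: gk_def persp_ent plogq_eq sum_negf)

lemma gk_rep2:
  assumes A: "\<And>u i j. 0 \<le> A u i j" and p: "p \<in> belief_simplex"
  shows "gk A c k p u = - (\<Sum>i\<in>UNIV. (\<Sum>j\<in>UNIV. xl (A u i j * p $ j)) - xl (\<Sum>l\<in>UNIV. A u i l * p $ l))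
      + (\<Sum>i\<in>UNIV. p $ i * c k i u)"
proof -
  have "0 \<le> A u i j * p $ j" for i j using A p by (simp add: belief_simplex_def)
  then show ?thesis
    by (simp add: gk_def plogq_eq xlog_split[where x="\<lambda>j. A u _ j * p $ j", symmetric])
qed

lemma gT_cont: "continuous_on belief_simplex (gT cT :: real^'n::finite \<Rightarrow> real)"
  unfolding gT_rep2 by (intro continuous_intros)

lemma gT_concave: "concave_on belief_simplex (gT cT :: real^'n::finite \<Rightarrow> real)"
  unfolding gT_rep by (intro concave_on_add ent_concave concave_lin convex_simplex)

lemma gk_cont:
  assumes A: "\<And>u i j. 0 \<le> A u i j"
  shows "continuous_on belief_simplex (\<lambda>p::real^'n::finite. gk A c k p u)"
proof -
  have "continuous_on belief_simplex (\<lambda>p::real^'n. - (\<Sum>i\<in>UNIV. (\<Sum>j\<in>UNIV. xl (A u i j * p $ j)) - xl (\<Sum>l\<in>UNIV. A u i l * p $ l))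
      + (\<Sum>i\<in>UNIV. p $ i * c k i u))" (is "continuous_on _ ?e")
    by (intro continuous_intros)
  moreover have eq: "\<And>p. p \<in> belief_simplex \<Longrightarrow> gk A c k p u = ?e p" using gk_rep2[of A] A by blast
  ultimately show ?thesis using continuous_on_cong[OF refl eq] by simp
qed

lemma gk_concave:
  assumes A: "\<And>u i j. 0 \<le> A u i j"
  shows "concave_on belief_simplex (\<lambda>p::real^'n::finite. gk A c k p u)"
  unfolding gk_rep
proof (intro concave_on_add concave_lin convex_simplex concave_on_sum_fun finite_UNIV)
  fix i
  show "concave_on belief_simplex (\<lambda>p::real^'n. persp ent (\<chi> j. A u i j * p $ j))"
  proof (rule concave_comp_linear[OF persp_concave[OF ent_concave] convex_simplex])
    fix p :: "real^'n" assume "p \<in> belief_simplex"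
    then show "(\<chi> j. A u i j * p $ j) \<in> orth" using A by (simp add: orth_def belief_simplex_def)
  next
    fix x y :: "real^'n" and a b :: real
    show "(\<chi> j. A u i j * (a *\<^sub>R x + b *\<^sub>R y) $ j) = a *\<^sub>R (\<chi> j. A u i j * x $ j) + b *\<^sub>R (\<chi> j. A u i j * y $ j)"
      by (simp add: vec_eq_iff algebra_simps)
  qed
qed simp


lemma compact_simplex: "compact (belief_simplex :: (real^'n::finite) set)"
proof -
  have "belief_simplex = cbox (0::real^'n) 1 \<inter> {x. (\<Sum>i\<in>UNIV. x $ i) = 1}"
    by (auto simp: belief_simplex_def mem_box_cart)
  moreover have "closed {x::real^'n. (\<Sum>i\<in>UNIV. x $ i) = 1}"
    by (intro closed_Collect_eq continuous_intros)
  ultimately show ?thesis by (metis compact_Int_closed compact_cbox)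
qed

lemma simplex_ne: "(belief_simplex :: (real^'n::finite) set) \<noteq> {}"
proof -
  have c: "real CARD('n) \<ge> 1" by simp
  have "(\<chi> i. 1 / real CARD('n)) \<in> (belief_simplex :: (real^'n) set)"
    using c by (auto simp: belief_simplex_def)
  then show ?thesis by blast
qed

lemma concave_on_cong':
  assumes "concave_on S g" "\<And>x. x \<in> S \<Longrightarrow> f x = g x"
  shows "concave_on S f"
  using assms unfolding concave_on_iff
  by (smt (verit, best) convexD)

lemma Min_concave:
  fixes f :: "'u::finite \<Rightarrow> 'a::real_vector \<Rightarrow> real"
  assumes "\<And>u. concave_on S (f u)"
  shows "concave_on S (\<lambda>p. Min (range (\<lambda>u. f u p)))"
  unfolding concave_on_iff
proof (intro conjI ballI allI impI)
  show "convex S" using assms[of undefined] by (simp add: concave_on_iff)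
  fix x y and a b :: real assume x: "x \<in> S" and y: "y \<in> S" and a: "0 \<le> a" and b: "0 \<le> b" and ab: "a + b = 1"
  obtain u0 where u0: "Min (range (\<lambda>u. f u (a *\<^sub>R x + b *\<^sub>R y))) = f u0 (a *\<^sub>R x + b *\<^sub>R y)"
  proof -
    have "Min (range (\<lambda>u. f u (a *\<^sub>R x + b *\<^sub>R y))) \<in> range (\<lambda>u. f u (a *\<^sub>R x + b *\<^sub>R y))"
      by (rule Min_in) auto
    then show ?thesis using that by (metis (no_types, lifting) imageE)
  qed
  have "a * f u0 x + b * f u0 y \<le> f u0 (a *\<^sub>R x + b *\<^sub>R y)"
    using assms[of u0] x y a b ab unfolding concave_on_iff by blast
  moreover have "a * Min (range (\<lambda>u. f u x)) \<le> a * f u0 x"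
    using a by (intro mult_left_mono Min_le) auto
  moreover have "b * Min (range (\<lambda>u. f u y)) \<le> b * f u0 y"
    using b by (intro mult_left_mono Min_le) auto
  ultimately show "a * Min (range (\<lambda>u. f u x)) + b * Min (range (\<lambda>u. f u y))
      \<le> Min (range (\<lambda>u. f u (a *\<^sub>R x + b *\<^sub>R y)))" using u0 by linarith
qed

lemma tendsto_Min_set:
  fixes f :: "'u \<Rightarrow> nat \<Rightarrow> real"
  assumes "finite U" "U \<noteq> {}" "\<And>u. u \<in> U \<Longrightarrow> (\<lambda>m. f u m) \<longlonglongrightarrow> l u"
  shows "(\<lambda>m. Min ((\<lambda>u. f u m) ` U)) \<longlonglongrightarrow> Min (l ` U)"
  using assms
proof (induction U rule: finite_ne_induct)
  case (singleton x) then show ?case by simp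
next
  case (insert x F)
  then show ?case by (simp add: Min_insert tendsto_min)
qed

lemma Min_continuous:
  fixes f :: "'u::finite \<Rightarrow> real^'n::finite \<Rightarrow> real"
  assumes "\<And>u. continuous_on S (f u)"
  shows "continuous_on S (\<lambda>p. Min (range (\<lambda>u. f u p)))"
proof (rule continuous_on_sequentiallyI)
  fix x :: "nat \<Rightarrow> real^'n" and a assume "\<forall>n. x n \<in> S" "a \<in> S" "x \<longlonglongrightarrow> a"
  then have "(\<lambda>m. f u (x m)) \<longlonglongrightarrow> f u a" for u
    using assms[of u] unfolding continuous_on_sequentially comp_def by blast
  then show "(\<lambda>n. Min (range (\<lambda>u. f u (x n)))) \<longlonglongrightarrow> Min (range (\<lambda>u. f u a))"
    by (intro tendsto_Min_set) auto
qed


lemma concave_onD2: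
  assumes "concave_on S f" "x \<in> S" "y \<in> S" "0 \<le> u" "0 \<le> v" "u + v = 1"
  shows "u * f x + v * f y \<le> f (u *\<^sub>R x + v *\<^sub>R y)"
  using assms unfolding concave_on_iff by blast

lemma step:
  fixes A :: "'u::finite \<Rightarrow> 'n::finite \<Rightarrow> 'n \<Rightarrow> real"
    and B :: "'u \<Rightarrow> 'n \<Rightarrow> 'y \<Rightarrow> real"
    and M :: "'y measure"
    and J :: "real^'n \<Rightarrow> real"
  assumes A_nonneg: "\<And>u i j. 0 \<le> A u i j"
    and A_stoch: "\<And>u j. (\<Sum>i\<in>UNIV. A u i j) = 1"
    and B_meas: "\<And>u i. B u i \<in> borel_measurable M"
    and B_nonneg: "\<And>u i y. y \<in> space M \<Longrightarrow> 0 \<le> B u i y"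
    and B_dens: "\<And>u i. (\<integral>\<^sup>+ y. ennreal (B u i y) \<partial>M) = 1"
    and Jc: "concave_on belief_simplex J" and Jcont: "continuous_on belief_simplex J"
  shows "concave_on belief_simplex (\<lambda>p. Min (range (\<lambda>u. gk A c k p u +
        (\<integral>y. J (filt A B p u y) * obs_density A B p u y \<partial>M))))"
    and "continuous_on belief_simplex (\<lambda>p. Min (range (\<lambda>u. gk A c k p u +
        (\<integral>y. J (filt A B p u y) * obs_density A B p u y \<partial>M))))"
proof -
  note [measurable] = B_meas
  define S where "S = (belief_simplex :: (real^'n) set)"
  have Sc: "compact S" and Sne: "S \<noteq> {}" and Scv: "convex S"
    by (auto simp: S_def compact_simplex simplex_ne convex_simplex)
  have Scl: "closed S" using Sc compact_imp_closed by blast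
  have "bounded (J ` S)"
    using compact_continuous_image[OF Jcont[folded S_def] Sc] compact_imp_bounded by blast
  then obtain K where K: "\<And>p. p \<in> S \<Longrightarrow> \<bar>J p\<bar> \<le> K"
    unfolding bounded_iff by auto
  have K0: "0 \<le> K" using Sne K by (meson all_not_in_conv abs_ge_zero order_trans)
  define J' where "J' = (\<lambda>z. J (closest_point S z))"
  have cpS: "closest_point S z \<in> S" for z using closest_point_in_set[OF Scl Sne] .
  have J'cont: "continuous_on UNIV J'"
    unfolding J'_def
    by (rule continuous_on_compose2[OF Jcont[folded S_def] continuous_on_closest_point[OF Scv Scl Sne]])
       (use cpS in auto)
  have J'isCont: "isCont J' z" for z
    using J'cont continuous_on_eq_continuous_at[of UNIV J'] by auto
  have J'K: "\<bar>J' z\<bar> \<le> K" for z using K cpS by (simp add: J'_def)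
  have J'S: "z \<in> S \<Longrightarrow> J' z = J z" for z by (simp add: J'_def closest_point_self)
  have J'conc: "concave_on belief_simplex J'"
    by (rule concave_on_cong'[OF Jc]) (simp add: J'S S_def)
  define b where "b u p i = (\<Sum>j\<in>UNIV. A u i j * p $ j)" for u and p :: "real^'n" and i
  define w where "w u p y = (\<chi> i. B u i y * b u p i)" for u p y
  define s where "s u p y = (\<Sum>i\<in>UNIV. B u i y * b u p i)" for u p y
  define I where "I u p y = persp J' (w u p y)" for u p y
  have b_nonneg: "p \<in> S \<Longrightarrow> 0 \<le> b u p i" for u p i
    using A_nonneg by (auto simp: b_def S_def belief_simplex_def intro!: sum_nonneg)
  have b_sum: "p \<in> S \<Longrightarrow> (\<Sum>i\<in>UNIV. b u p i) = 1" for u p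
  proof -
    assume p: "p \<in> S"
    have "(\<Sum>i\<in>UNIV. b u p i) = (\<Sum>j\<in>UNIV. (\<Sum>i\<in>UNIV. A u i j) * p $ j)"
      unfolding b_def by (subst sum.swap) (simp add: sum_distrib_right)
    also have "\<dots> = 1" using p by (simp add: A_stoch S_def belief_simplex_def)
    finally show ?thesis .
  qed
  have b_le1: "p \<in> S \<Longrightarrow> b u p i \<le> 1" for u p i
  proof -
    assume p: "p \<in> S"
    have "b u p i \<le> (\<Sum>i\<in>UNIV. b u p i)" using b_nonneg[OF p] by (intro member_le_sum) auto
    then show ?thesis using b_sum[OF p] by simp
  qed
  have w_orth: "y \<in> space M \<Longrightarrow> p \<in> S \<Longrightarrow> w u p y \<in> orth" for u p y
    using B_nonneg b_nonneg by (simp add: w_def orth_def)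
  have sum_w: "(\<Sum>i\<in>UNIV. w u p y $ i) = s u p y" for u p y
    by (simp add: w_def s_def)
  have s_nonneg: "y \<in> space M \<Longrightarrow> p \<in> S \<Longrightarrow> 0 \<le> s u p y" for u p y
    using B_nonneg b_nonneg by (auto simp: s_def intro!: sum_nonneg)
  have I_alt: "I u p y = s u p y * J' ((1 / s u p y) *\<^sub>R w u p y)" for u p y
    by (simp add: I_def persp_def sum_w)
  have eq_int: "y \<in> space M \<Longrightarrow> p \<in> S \<Longrightarrow>
      J (filt A B p u y) * obs_density A B p u y = I u p y" for u p y
  proof -
    assume y: "y \<in> space M" and p: "p \<in> S"
    have den: "(\<Sum>l\<in>UNIV. \<Sum>j\<in>UNIV. B u l y * A u l j * p $ j) = s u p y"
      by (simp add: s_def b_def sum_distrib_left mult.assoc)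
    have f: "filt A B p u y = (1 / s u p y) *\<^sub>R w u p y"
      by (simp add: filt_def den w_def vec_eq_iff b_def)
    have o: "obs_density A B p u y = s u p y"
      by (simp add: obs_density_def den)
    show ?thesis
    proof (cases "s u p y = 0")
      case True then show ?thesis by (simp add: I_alt o)
    next
      case False
      then have sp: "s u p y > 0" using s_nonneg[OF y p, of u] by auto
      have "(1 / s u p y) *\<^sub>R w u p y \<in> S"
        using orth_normalize[OF w_orth[OF y p]] sp by (simp add: sum_w S_def)
      then show ?thesis by (simp add: I_alt f o J'S)
    qed
  qed
  have I_bound1: "y \<in> space M \<Longrightarrow> p \<in> S \<Longrightarrow> \<bar>I u p y\<bar> \<le> K * s u p y" for u p y
  proof -
    assume y: "y \<in> space M" and p: "p \<in> S"
    have "\<bar>I u p y\<bar> = s u p y * \<bar>J' ((1 / s u p y) *\<^sub>R w u p y)\<bar>"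
      using s_nonneg[OF y p, of u] by (simp add: I_alt abs_mult)
    also have "\<dots> \<le> s u p y * K" using s_nonneg[OF y p, of u] J'K by (intro mult_left_mono) auto
    finally show ?thesis by (simp add: mult.commute)
  qed
  have s_le: "y \<in> space M \<Longrightarrow> p \<in> S \<Longrightarrow> s u p y \<le> (\<Sum>i\<in>UNIV. B u i y)" for u p y
    unfolding s_def using B_nonneg b_le1
    by (intro sum_mono) (simp add: mult_left_le)
  have I_bound: "y \<in> space M \<Longrightarrow> p \<in> S \<Longrightarrow> \<bar>I u p y\<bar> \<le> K * (\<Sum>i\<in>UNIV. B u i y)" for u p y
    using I_bound1[of y p u] s_le[of y p u] K0 by (meson mult_left_mono order_trans)
  have s_meas: "s u p \<in> borel_measurable M" for u p
    unfolding s_def by (intro borel_measurable_sum borel_measurable_times B_meas borel_measurable_const)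
  have v_meas: "(\<lambda>y. (1 / s u p y) *\<^sub>R w u p y) \<in> borel_measurable M" for u p
  proof (subst borel_measurable_euclidean_space, intro ballI)
    fix e :: "real^'n" assume "e \<in> Basis"
    then obtain j where e: "e = axis j 1" unfolding Basis_vec_def by auto
    have "(\<lambda>y. ((1 / s u p y) *\<^sub>R w u p y) \<bullet> e) = (\<lambda>y. (1 / s u p y) * (B u j y * b u p j))"
      unfolding e inner_axis by (simp add: w_def)
    moreover have "(\<lambda>y. (1 / s u p y) * (B u j y * b u p j)) \<in> borel_measurable M"
      by (intro borel_measurable_times borel_measurable_divide s_meas borel_measurable_const B_meas)
    ultimately show "(\<lambda>y. ((1 / s u p y) *\<^sub>R w u p y) \<bullet> e) \<in> borel_measurable M" by simp
  qed
  have I_meas: "I u p \<in> borel_measurable M" for u p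
  proof -
    have "(\<lambda>y. J' ((1 / s u p y) *\<^sub>R w u p y)) \<in> borel_measurable M"
      by (rule borel_measurable_continuous_on[OF J'cont v_meas])
    then show ?thesis unfolding I_alt[abs_def] using s_meas by (intro borel_measurable_times)
  qed
  have Bint: "integrable M (\<lambda>y. \<Sum>i\<in>UNIV. B u i y)" for u
  proof (rule Bochner_Integration.integrable_sum)
    fix i
    show "integrable M (B u i)"
      by (rule integrableI_nonneg) (auto simp: B_dens B_nonneg intro!: AE_I2)
  qed
  have Kint: "integrable M (\<lambda>y. K * (\<Sum>i\<in>UNIV. B u i y))" for u
    using Bint by (rule integrable_mult_right)
  have I_int: "p \<in> S \<Longrightarrow> integrable M (I u p)" for u p
  proof (rule Bochner_Integration.integrable_bound[OF Kint I_meas])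
    assume p: "p \<in> S"
    show "AE y in M. norm (I u p y) \<le> norm (K * (\<Sum>i\<in>UNIV. B u i y))"
    proof (rule AE_I2)
      fix y assume y: "y \<in> space M"
      have "\<bar>I u p y\<bar> \<le> K * (\<Sum>i\<in>UNIV. B u i y)" by (rule I_bound[OF y p])
      then show "norm (I u p y) \<le> norm (K * (\<Sum>i\<in>UNIV. B u i y))"
        by (metis real_norm_def abs_ge_self order_trans)
    qed
  qed
  define F where "F u p = (\<integral>y. I u p y \<partial>M)" for u p
  have F_eq: "p \<in> S \<Longrightarrow> (\<integral>y. J (filt A B p u y) * obs_density A B p u y \<partial>M) = F u p" for u p
    unfolding F_def by (rule Bochner_Integration.integral_cong) (auto intro: eq_int)
  have w_lin: "w u (a *\<^sub>R p1 + c *\<^sub>R p2) y = a *\<^sub>R w u p1 y + c *\<^sub>R w u p2 y" for u a c p1 p2 y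
    by (simp add: w_def b_def vec_eq_iff algebra_simps sum.distrib sum_distrib_left)
  have F_conc: "concave_on S (F u)" for u
    unfolding concave_on_iff
  proof (intro conjI ballI allI impI Scv)
    fix p1 p2 and a c :: real assume p1: "p1 \<in> S" and p2: "p2 \<in> S" and a: "0 \<le> a" and c: "0 \<le> c" and ac: "a + c = 1"
    have pc: "a *\<^sub>R p1 + c *\<^sub>R p2 \<in> S" using Scv p1 p2 a c ac by (simp add: convexD)
    have pw: "a * I u p1 y + c * I u p2 y \<le> I u (a *\<^sub>R p1 + c *\<^sub>R p2) y" if y: "y \<in> space M" for y
      unfolding I_def w_lin by (rule concave_onD2[OF persp_concave[OF J'conc] w_orth[OF y p1] w_orth[OF y p2] a c ac])
    have "(\<integral>y. a * I u p1 y + c * I u p2 y \<partial>M) \<le> F u (a *\<^sub>R p1 + c *\<^sub>R p2)"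
      unfolding F_def using pw I_int[OF p1] I_int[OF p2] I_int[OF pc]
      by (intro Bochner_Integration.integral_mono) auto
    then show "a * F u p1 + c * F u p2 \<le> F u (a *\<^sub>R p1 + c *\<^sub>R p2)"
      using I_int[OF p1] I_int[OF p2] by (simp add: F_def)
  qed
  have F_cont: "continuous_on S (F u)" for u
  proof (rule continuous_on_sequentiallyI)
    fix x :: "nat \<Rightarrow> real^'n" and a assume xS: "\<forall>n. x n \<in> S" and aS: "a \<in> S" and xa: "x \<longlonglongrightarrow> a"
    show "(\<lambda>n. F u (x n)) \<longlonglongrightarrow> F u a"
      unfolding F_def
    proof (rule integral_dominated_convergence[OF I_meas I_meas Kint])
      show "AE y in M. norm (I u (x n) y) \<le> K * (\<Sum>i\<in>UNIV. B u i y)" for n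
      proof (rule AE_I2)
        fix y assume y: "y \<in> space M"
        show "norm (I u (x n) y) \<le> K * (\<Sum>i\<in>UNIV. B u i y)"
          using I_bound[OF y, of "x n" u] xS by simp
      qed
      show "AE y in M. (\<lambda>n. I u (x n) y) \<longlonglongrightarrow> I u a y"
      proof (rule AE_I2)
        fix y assume y: "y \<in> space M"
        have bt: "(\<lambda>n. b u (x n) i) \<longlonglongrightarrow> b u a i" for i
          unfolding b_def by (intro tendsto_intros xa)
        have wt: "(\<lambda>n. w u (x n) y) \<longlonglongrightarrow> w u a y"
          unfolding w_def by (intro tendsto_intros bt)
        have st: "(\<lambda>n. s u (x n) y) \<longlonglongrightarrow> s u a y"
          unfolding s_def by (intro tendsto_intros bt)
        show "(\<lambda>n. I u (x n) y) \<longlonglongrightarrow> I u a y"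
        proof (cases "s u a y = 0")
          case False
          have "(\<lambda>n. (1 / s u (x n) y) *\<^sub>R w u (x n) y) \<longlonglongrightarrow> (1 / s u a y) *\<^sub>R w u a y"
            using False by (intro tendsto_intros st wt)
          then have "(\<lambda>n. J' ((1 / s u (x n) y) *\<^sub>R w u (x n) y)) \<longlonglongrightarrow> J' ((1 / s u a y) *\<^sub>R w u a y)"
            by (rule isCont_tendsto_compose[OF J'isCont])
          then show ?thesis unfolding I_alt by (intro tendsto_mult st)
        next
          case True
          have "(\<lambda>n. K * s u (x n) y) \<longlonglongrightarrow> K * 0"
            using True by (intro tendsto_intros st[unfolded True])
          have "(\<lambda>n. I u (x n) y) \<longlonglongrightarrow> 0"
          proof (rule Lim_null_comparison[OF always_eventually])
            show "\<forall>n. norm (I u (x n) y) \<le> K * s u (x n) y"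
              using I_bound1[OF y] xS by simp
          qed (use \<open>(\<lambda>n. K * s u (x n) y) \<longlonglongrightarrow> K * 0\<close> in simp)
          then show ?thesis using True by (simp add: I_alt)
        qed
      qed
    qed
  qed
  define G where "G u p = gk A c k p u + F u p" for u p
  have G_conc: "concave_on S (G u)" for u
    unfolding G_def[abs_def] S_def using F_conc[unfolded S_def]
    by (intro concave_on_add gk_concave A_nonneg) auto
  have G_cont: "continuous_on S (G u)" for u
    unfolding G_def[abs_def] S_def using F_cont[unfolded S_def]
    by (intro continuous_on_add gk_cont A_nonneg) auto
  have tgt: "p \<in> S \<Longrightarrow> Min (range (\<lambda>u. gk A c k p u +
        (\<integral>y. J (filt A B p u y) * obs_density A B p u y \<partial>M))) = Min (range (\<lambda>u. G u p))" for p
    by (simp add: G_def F_eq)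
  show "concave_on belief_simplex (\<lambda>p. Min (range (\<lambda>u. gk A c k p u +
        (\<integral>y. J (filt A B p u y) * obs_density A B p u y \<partial>M))))"
    using concave_on_cong'[OF Min_concave[OF G_conc] tgt] by (simp add: S_def)
  show "continuous_on belief_simplex (\<lambda>p. Min (range (\<lambda>u. gk A c k p u +
        (\<integral>y. J (filt A B p u y) * obs_density A B p u y \<partial>M))))"
  proof -
    have mc: "continuous_on S (\<lambda>p. Min (range (\<lambda>u. G u p)))"
      by (rule Min_continuous) (rule G_cont)
    have "continuous_on S (\<lambda>p. Min (range (\<lambda>u. gk A c k p u +
        (\<integral>y. J (filt A B p u y) * obs_density A B p u y \<partial>M))))"
      using mc by (rule continuous_on_cong[THEN iffD1, OF refl, rotated]) (simp add: tgt)
    then show ?thesis by (simp add: S_def)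
  qed
qed


theorem theorem2:
  fixes A :: "'u::finite \<Rightarrow> 'n::finite \<Rightarrow> 'n \<Rightarrow> real"
    and B :: "'u \<Rightarrow> 'n \<Rightarrow> 'y \<Rightarrow> real"
    and M :: "'y measure"
    and cT :: "'n \<Rightarrow> real"
    and c :: "nat \<Rightarrow> 'n \<Rightarrow> 'u \<Rightarrow> real"
    and T k :: nat
  assumes A_nonneg: "\<And>u i j. 0 \<le> A u i j"
    and A_stoch: "\<And>u j. (\<Sum>i\<in>UNIV. A u i j) = 1"
    and B_meas: "\<And>u i. B u i \<in> borel_measurable M"
    and B_nonneg: "\<And>u i y. y \<in> space M \<Longrightarrow> 0 \<le> B u i y"
    and B_dens: "\<And>u i. (\<integral>\<^sup>+ y. ennreal (B u i y) \<partial>M) = 1"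
    and cT_nonneg: "\<And>i. 0 \<le> cT i"
    and c_nonneg: "\<And>k i u. 0 \<le> c k i u"
    and "k \<le> T"
  shows "concave_on belief_simplex (Jval A B M cT c T k)"
proof -
  have main: "concave_on belief_simplex (Jrem A B M cT c T n) \<and> continuous_on belief_simplex (Jrem A B M cT c T n)" for n
  proof (induction n)
    case 0
    have e: "Jrem A B M cT c T 0 = gT cT" by (rule ext) simp
    show ?case unfolding e by (simp add: gT_concave gT_cont)
  next
    case (Suc n)
    have e: "Jrem A B M cT c T (Suc n) = (\<lambda>p. Min (range (\<lambda>u. gk A c (T - Suc n) p u +
        (\<integral>y. Jrem A B M cT c T n (filt A B p u y) * obs_density A B p u y \<partial>M))))"
      by (rule ext) simp
    show ?case unfolding e
      using step[of A B M, OF A_nonneg A_stoch B_meas B_nonneg B_dens, of "Jrem A B M cT c T n" c "T - Suc n"] Suc.IH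
      by blast
  qed
  show ?thesis unfolding Jval_def using main by blast
qed

end
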